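(* Let $G$ be a finite group of order $v=mn$ and $H\le G$ a subgroup of order $n$. Suppose $S'$ is a family of subsets of $G$ which partitions $G\setminus H$ and is both a $(v,s,k,\lambda_1,\mu_1)$-DPDF and a $(v,s,k,\lambda_2,\mu_2)$-EPDF in $G$. Then (i) $n\mid\mu_1$ and $n\mid\mu_2$; (ii) if $\gcd(mn-n,mn-1)=1$, then either (a) $S'$ is an $(mn,s,k,k-1,0)$-DPDF and an $(mn,s,k,mn-2n-k+1,mn-n)$-EPDF, or (b) $S'$ is an $(mn,s,k,k-n,mn-n)$-DPDF and an $(mn,s,k,mn-n-k,0)$-EPDF; (iii) if $n=2$, then either (a) $S'$ is a $(2m,s,k,k-1,0)$-DPDF and a $(2m,s,k,2m-3-k,2m-2)$-EPDF, or (b) $S'$ is a $(2m,s,k,k-2,2m-2)$-DPDF and a $(2m,s,k,2m-2-k,0)$-EPDF.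
   Context: Groups are written multiplicatively with identity $e$; $G^*=G\setminus\{e\}$. For $D\subseteq G$, $\Delta(D)$ is the multiset $\{xy^{-1}: x,y\in D, x\ne y\}$; for $D_1,D_2\subseteq G$, $\Delta(D_1,D_2)$ is the multiset $\{xy^{-1}:x\in D_1,y\in D_2\}$. For a family $A=\{A_1,\dots,A_s\}$ of pairwise disjoint subsets, ${\rm Int}(A)=\bigcup_i\Delta(A_i)$ and ${\rm Ext}(A)=\bigcup_{i\ne j}\Delta(A_i,A_j)$ (multiset unions). For $|G|=v$, a $(v,s,k,\lambda,\mu)$-DPDF is a family of $s$ pairwise disjoint $k$-subsets of $G^*$ with union $S$ such that ${\rm Int}(A)$ contains each element of $S$ exactly $\lambda$ times and each element of $G\setminus(S\cup\{e\})$ exactly $\mu$ times; a $(v,s,k,\lambda,\mu)$-EPDF is defined the same way using ${\rm Ext}(A)$. A family partitions a set $X$ if its members are pairwise disjoint with union $X$. *)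

theory Defs
  imports "HOL-Algebra.Coset" "HOL-Library.Multiset"
begin

definition Delta :: "('a, 'b) monoid_scheme \<Rightarrow> 'a set \<Rightarrow> 'a multiset" where
  "Delta G D = image_mset (\<lambda>(x, y). x \<otimes>\<^bsub>G\<^esub> inv\<^bsub>G\<^esub> y)
                 (mset_set {(x, y). x \<in> D \<and> y \<in> D \<and> x \<noteq> y})"

definition Delta2 :: "('a, 'b) monoid_scheme \<Rightarrow> 'a set \<Rightarrow> 'a set \<Rightarrow> 'a multiset" where
  "Delta2 G D1 D2 = image_mset (\<lambda>(x, y). x \<otimes>\<^bsub>G\<^esub> inv\<^bsub>G\<^esub> y) (mset_set (D1 \<times> D2))"

definition IntD :: "('a, 'b) monoid_scheme \<Rightarrow> 'a set set \<Rightarrow> 'a multiset" where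
  "IntD G A = (\<Sum>B\<in>A. Delta G B)"

definition ExtD :: "('a, 'b) monoid_scheme \<Rightarrow> 'a set set \<Rightarrow> 'a multiset" where
  "ExtD G A = (\<Sum>P\<in>{(B, C). B \<in> A \<and> C \<in> A \<and> B \<noteq> C}. Delta2 G (fst P) (snd P))"

definition pdf_family :: "('a, 'b) monoid_scheme \<Rightarrow> nat \<Rightarrow> nat \<Rightarrow> nat \<Rightarrow> 'a set set \<Rightarrow> bool" where
  "pdf_family G v s k A \<longleftrightarrow>
     order G = v \<and> finite A \<and> card A = s \<and> pairwise disjnt A \<and>
     (\<forall>B\<in>A. B \<subseteq> carrier G - {\<one>\<^bsub>G\<^esub>} \<and> card B = k)"

definition DPDF :: "('a, 'b) monoid_scheme \<Rightarrow> nat \<Rightarrow> nat \<Rightarrow> nat \<Rightarrow> int \<Rightarrow> int \<Rightarrow> 'a set set \<Rightarrow> bool" where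
  "DPDF G v s k lam mu A \<longleftrightarrow> pdf_family G v s k A \<and>
     (\<forall>g\<in>\<Union>A. int (count (IntD G A) g) = lam) \<and>
     (\<forall>g\<in>carrier G - (\<Union>A \<union> {\<one>\<^bsub>G\<^esub>}). int (count (IntD G A) g) = mu)"

definition EPDF :: "('a, 'b) monoid_scheme \<Rightarrow> nat \<Rightarrow> nat \<Rightarrow> nat \<Rightarrow> int \<Rightarrow> int \<Rightarrow> 'a set set \<Rightarrow> bool" where
  "EPDF G v s k lam mu A \<longleftrightarrow> pdf_family G v s k A \<and>
     (\<forall>g\<in>\<Union>A. int (count (ExtD G A) g) = lam) \<and>
     (\<forall>g\<in>carrier G - (\<Union>A \<union> {\<one>\<^bsub>G\<^esub>}). int (count (ExtD G A) g) = mu)"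

definition partitions :: "'a set set \<Rightarrow> 'a set \<Rightarrow> bool" where
  "partitions A X \<longleftrightarrow> pairwise disjnt A \<and> \<Union>A = X"

end

theory Submission
  imports Defs
begin

lemma count_img_mset_set:
  assumes "finite P"
  shows "count (image_mset f (mset_set P)) g = card {p\<in>P. f p = g}"
proof -
  have "count (image_mset f (mset_set P)) g = (\<Sum>y\<in>f -` {g} \<inter> P. 1)"
    using assms by (simp add: count_image_mset)
  also have "\<dots> = card {p\<in>P. f p = g}" by (simp add: vimage_def Int_def conj_commute)
  finally show ?thesis .
qed

lemma count_sum_mset: "finite A \<Longrightarrow> count (\<Sum>B\<in>A. F B) g = (\<Sum>B\<in>A. count (F B) g)"
  by (induction A rule: finite_induct) auto

lemma size_via_sum:
  assumes "finite X" "set_mset M \<subseteq> X"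
  shows "size M = (\<Sum>g\<in>X. count M g)"
proof -
  have "size M = (\<Sum>g\<in>set_mset M. count M g)" by (simp add: size_multiset_overloaded_eq)
  also have "\<dots> = (\<Sum>g\<in>X. count M g)"
    by (rule sum.mono_neutral_left) (use assms in \<open>auto simp: not_in_iff\<close>)
  finally show ?thesis .
qed

lemma count_Delta:
  assumes "finite B"
  shows "count (Delta G B) g = card {(x,y). x\<in>B \<and> y\<in>B \<and> x\<noteq>y \<and> x \<otimes>\<^bsub>G\<^esub> inv\<^bsub>G\<^esub> y = g}"
proof -
  have fin: "finite {(x, y). x \<in> B \<and> y \<in> B \<and> x \<noteq> y}"
    by (rule finite_subset[of _ "B \<times> B"]) (use assms in auto)
  show ?thesis unfolding Delta_def count_img_mset_set[OF fin]
    by (rule arg_cong[where f=card]) auto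
qed

lemma count_Delta2:
  assumes "finite B" "finite C" "disjnt B C"
  shows "count (Delta2 G B C) g = card {(x,y). x\<in>B \<and> y\<in>C \<and> x\<noteq>y \<and> x \<otimes>\<^bsub>G\<^esub> inv\<^bsub>G\<^esub> y = g}"
proof -
  have fin: "finite (B \<times> C)" using assms by auto
  show ?thesis unfolding Delta2_def count_img_mset_set[OF fin]
    by (rule arg_cong[where f=card]) (use assms in \<open>auto simp: disjnt_def\<close>)
qed

lemma int_ext_count:
  assumes finA: "finite A" and finB: "\<forall>B\<in>A. finite B" and pw: "pairwise disjnt A"
  shows "count (IntD G A) g + count (ExtD G A) g
     = card {(x,y). x \<in> \<Union>A \<and> y \<in> \<Union>A \<and> x\<noteq>y \<and> x \<otimes>\<^bsub>G\<^esub> inv\<^bsub>G\<^esub> y = g}"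
proof -
  define F where "F B C = {(x,y). x\<in>B \<and> y\<in>C \<and> x\<noteq>y \<and> x \<otimes>\<^bsub>G\<^esub> inv\<^bsub>G\<^esub> y = g}" for B C
  have finF: "finite (F B C)" if "B \<in> A" "C \<in> A" for B C
    by (rule finite_subset[of _ "B \<times> C"]) (use finB that in \<open>auto simp: F_def\<close>)
  have I: "count (IntD G A) g = (\<Sum>B\<in>A. card (F B B))"
    unfolding IntD_def count_sum_mset[OF finA] F_def
    by (rule sum.cong) (auto simp: finB count_Delta)
  have Q: "{(B, C). B \<in> A \<and> C \<in> A \<and> B \<noteq> C} = Sigma A (\<lambda>B. A - {B})" by auto
  have E0: "count (ExtD G A) g = (\<Sum>P\<in>Sigma A (\<lambda>B. A-{B}). count (Delta2 G (fst P) (snd P)) g)"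
    unfolding ExtD_def Q by (rule count_sum_mset) (use finA in auto)
  also have "\<dots> = (\<Sum>P\<in>Sigma A (\<lambda>B. A-{B}). card (F (fst P) (snd P)))"
  proof (rule sum.cong[OF refl])
    fix P assume "P \<in> Sigma A (\<lambda>B. A - {B})"
    then obtain B C where P: "P = (B,C)" "B \<in> A" "C \<in> A" "B \<noteq> C" by auto
    have "disjnt B C" using pw P unfolding pairwise_def by auto
    then show "count (Delta2 G (fst P) (snd P)) g = card (F (fst P) (snd P))"
      unfolding P(1) fst_conv snd_conv F_def using finB P by (intro count_Delta2) auto
  qed
  also have "\<dots> = (\<Sum>B\<in>A. \<Sum>C\<in>A-{B}. card (F B C))"
    by (subst sum.Sigma) (use finA in \<open>auto simp: split_beta\<close>)
  finally have E: "count (ExtD G A) g = (\<Sum>B\<in>A. \<Sum>C\<in>A-{B}. card (F B C))" .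
  have "count (IntD G A) g + count (ExtD G A) g = (\<Sum>B\<in>A. \<Sum>C\<in>A. card (F B C))"
    unfolding I E sum.distrib[symmetric]
    by (rule sum.cong, rule refl, subst sum.remove[of A], use finA in auto)
  also have "\<dots> = (\<Sum>B\<in>A. card (\<Union>C\<in>A. F B C))"
    apply (rule sum.cong, rule refl)
    apply (rule card_UN_disjoint[symmetric])
    using finA finF apply auto[2]
    using pw unfolding F_def pairwise_def disjnt_def by blast
  also have "\<dots> = card (\<Union>B\<in>A. \<Union>C\<in>A. F B C)"
    apply (rule card_UN_disjoint[symmetric])
    using finA finF apply auto[2]
    using pw unfolding F_def pairwise_def disjnt_def by blast
  also have "(\<Union>B\<in>A. \<Union>C\<in>A. F B C) = {(x,y). x \<in> \<Union>A \<and> y \<in> \<Union>A \<and> x\<noteq>y \<and> x \<otimes>\<^bsub>G\<^esub> inv\<^bsub>G\<^esub> y = g}"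
    unfolding F_def by blast
  finally show ?thesis .
qed


context group begin

lemma pair_count:
  assumes g: "g \<in> carrier G" "g \<noteq> \<one>" and S: "S \<subseteq> carrier G"
  shows "card {(x,y). x\<in>S \<and> y\<in>S \<and> x\<noteq>y \<and> x \<otimes> inv y = g} = card {y\<in>S. g \<otimes> y \<in> S}"
proof -
  have eq: "{(x,y). x\<in>S \<and> y\<in>S \<and> x\<noteq>y \<and> x \<otimes> inv y = g} = (\<lambda>y. (g \<otimes> y, y)) ` {y\<in>S. g \<otimes> y \<in> S}"
  proof (intro equalityI subsetI)
    fix p assume "p \<in> {(x,y). x\<in>S \<and> y\<in>S \<and> x\<noteq>y \<and> x \<otimes> inv y = g}"
    then obtain x y where p: "p = (x,y)" "x \<in> S" "y \<in> S" "x \<otimes> inv y = g" by auto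
    have "x = g \<otimes> y" using p S g
      by (metis inv_solve_right subsetD)
    then show "p \<in> (\<lambda>y. (g \<otimes> y, y)) ` {y\<in>S. g \<otimes> y \<in> S}" using p by auto
  next
    fix p assume "p \<in> (\<lambda>y. (g \<otimes> y, y)) ` {y\<in>S. g \<otimes> y \<in> S}"
    then obtain y where p: "p = (g \<otimes> y, y)" "y \<in> S" "g \<otimes> y \<in> S" by auto
    have yc: "y \<in> carrier G" using p S by auto
    have "g \<otimes> y \<noteq> y" using g yc by simp
    moreover have "g \<otimes> y \<otimes> inv y = g" using g yc by (simp add: m_assoc)
    ultimately show "p \<in> {(x,y). x\<in>S \<and> y\<in>S \<and> x\<noteq>y \<and> x \<otimes> inv y = g}" using p by auto
  qed
  show ?thesis unfolding eq by (rule card_image) (auto simp: inj_on_def)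
qed

lemma coset_card:
  assumes H: "subgroup H G" and fin: "finite (carrier G)" and g: "g \<in> carrier G"
  shows "card {y\<in>carrier G. g \<otimes> y \<in> H} = card H"
proof -
  have "{y\<in>carrier G. g \<otimes> y \<in> H} = (\<lambda>h. inv g \<otimes> h) ` H"
  proof (intro equalityI subsetI)
    fix y assume "y \<in> {y\<in>carrier G. g \<otimes> y \<in> H}"
    then have y: "y \<in> carrier G" "g \<otimes> y \<in> H" by auto
    have "y = inv g \<otimes> (g \<otimes> y)" using y g by (simp add: m_assoc[symmetric])
    then show "y \<in> (\<lambda>h. inv g \<otimes> h) ` H" using y by blast
  next
    fix y assume "y \<in> (\<lambda>h. inv g \<otimes> h) ` H"
    then obtain h where h: "h \<in> H" "y = inv g \<otimes> h" by auto
    have hc: "h \<in> carrier G" using h H subgroup.subset by blast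
    show "y \<in> {y\<in>carrier G. g \<otimes> y \<in> H}" using h hc g by (simp add: m_assoc[symmetric])
  qed
  moreover have "inj_on (\<lambda>h. inv g \<otimes> h) H"
    using g subgroup.subset[OF H] by (intro inj_onI) (metis Units_eq Units_l_cancel inv_closed subsetD)
  ultimately show ?thesis by (simp add: card_image)
qed

lemma shift_count:
  assumes H: "subgroup H G" and fin: "finite (carrier G)" and g: "g \<in> carrier G"
  shows "g \<in> H \<Longrightarrow> card {y\<in>carrier G - H. g \<otimes> y \<in> carrier G - H} = card (carrier G) - card H"
    and "g \<notin> H \<Longrightarrow> card {y\<in>carrier G - H. g \<otimes> y \<in> carrier G - H} = card (carrier G) - 2 * card H"
proof -
  have Hs: "H \<subseteq> carrier G" using H subgroup.subset by blast
  assume gH: "g \<in> H"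
  have "{y\<in>carrier G - H. g \<otimes> y \<in> carrier G - H} = carrier G - H"
  proof (intro equalityI subsetI)
    fix y assume y: "y \<in> carrier G - H"
    have "g \<otimes> y \<notin> H"
    proof
      assume "g \<otimes> y \<in> H"
      then have "inv g \<otimes> (g \<otimes> y) \<in> H" using gH H by (meson subgroup.m_closed subgroup.m_inv_closed)
      then show False using y g by (simp add: m_assoc[symmetric])
    qed
    then show "y \<in> {y\<in>carrier G - H. g \<otimes> y \<in> carrier G - H}" using y g by auto
  qed auto
  then show "card {y\<in>carrier G - H. g \<otimes> y \<in> carrier G - H} = card (carrier G) - card H"
    using fin Hs by (simp add: card_Diff_subset finite_subset)
next
  have Hs: "H \<subseteq> carrier G" using H subgroup.subset by blast
  assume gH: "g \<notin> H"
  define K where "K = {y\<in>carrier G. g \<otimes> y \<in> H}"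
  have K: "card K = card H" unfolding K_def using coset_card[OF H fin g] .
  have disj: "H \<inter> K = {}"
  proof (rule ccontr)
    assume "H \<inter> K \<noteq> {}"
    then obtain y where y: "y \<in> H" "y \<in> carrier G" "g \<otimes> y \<in> H" unfolding K_def by auto
    then have "(g \<otimes> y) \<otimes> inv y \<in> H" using H by (meson subgroup.m_closed subgroup.m_inv_closed)
    then show False using y g gH by (simp add: m_assoc)
  qed
  have "{y\<in>carrier G - H. g \<otimes> y \<in> carrier G - H} = carrier G - (H \<union> K)"
    unfolding K_def using g by auto
  moreover have "card (H \<union> K) = 2 * card H"
  proof -
    have "finite H" "finite K" using fin Hs unfolding K_def by (auto intro: finite_subset)
    then show ?thesis using card_Un_disjoint[of H K] disj K by simp
  qed
  moreover have "H \<union> K \<subseteq> carrier G" using Hs unfolding K_def by auto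
  moreover have "finite (H \<union> K)" using fin Hs unfolding K_def by (auto intro: finite_subset)
  ultimately show "card {y\<in>carrier G - H. g \<otimes> y \<in> carrier G - H} = card (carrier G) - 2 * card H"
    by (simp add: card_Diff_subset)
qed


lemma delta_count_one:
  assumes "finite B" "B \<subseteq> carrier G"
  shows "count (Delta G B) \<one> = 0"
proof -
  have e: "{(x,y). x\<in>B \<and> y\<in>B \<and> x\<noteq>y \<and> x \<otimes> inv y = \<one>} = {}"
    using assms(2) by (auto, metis inv_solve_right l_one subsetD one_closed)
  have "count (Delta G B) \<one> = card {(x,y). x\<in>B \<and> y\<in>B \<and> x\<noteq>y \<and> x \<otimes> inv y = \<one>}"
    by (rule count_Delta[OF assms(1)])
  then show ?thesis unfolding e by simp
qed

lemma IntD_one: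
  assumes "finite A" "\<forall>B\<in>A. finite B \<and> B \<subseteq> carrier G"
  shows "count (IntD G A) \<one> = 0"
  unfolding IntD_def count_sum_mset[OF assms(1)] using assms delta_count_one by simp

lemma IntD_sub:
  assumes "finite A" "\<forall>B\<in>A. finite B \<and> B \<subseteq> carrier G"
  shows "set_mset (IntD G A) \<subseteq> carrier G"
proof
  fix x assume "x \<in># IntD G A"
  then have "count (IntD G A) x \<noteq> 0" by simp
  then obtain B where B: "B \<in> A" "count (Delta G B) x \<noteq> 0"
    unfolding IntD_def count_sum_mset[OF assms(1)] by (meson sum.neutral)
  then have "x \<in># Delta G B" by (simp add: not_in_iff[symmetric])
  moreover have "finite {(x, y). x \<in> B \<and> y \<in> B \<and> x \<noteq> y}"
    by (rule finite_subset[of _ "B \<times> B"]) (use assms B in auto)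
  ultimately show "x \<in> carrier G" unfolding Delta_def using assms B by auto
qed

lemma size_sum_mset: fixes F :: "'c \<Rightarrow> 'd multiset" shows "finite A \<Longrightarrow> size (\<Sum>B\<in>A. F B) = (\<Sum>B\<in>A. size (F B))"
  by (induction A rule: finite_induct) auto

lemma size_Delta:
  assumes "finite B"
  shows "size (Delta G B) = card B * card B - card B"
proof -
  have eq: "{(x, y). x \<in> B \<and> y \<in> B \<and> x \<noteq> y} = B \<times> B - (\<lambda>x. (x,x)) ` B" by auto
  have "card ((\<lambda>x. (x,x)) ` B) = card B" by (rule card_image) (auto simp: inj_on_def)
  then show ?thesis unfolding Delta_def size_image_mset size_mset_set eq
    using assms by (subst card_Diff_subset) (auto simp: card_cartesian_product)
qed

lemma IntD_total:
  assumes "finite A" "\<forall>B\<in>A. finite B \<and> B \<subseteq> carrier G \<and> card B = k" "finite (carrier G)"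
  shows "(\<Sum>g\<in>carrier G. count (IntD G A) g) = card A * (k * k - k)"
proof -
  have "(\<Sum>g\<in>carrier G. count (IntD G A) g) = size (IntD G A)"
    using size_via_sum[OF assms(3) IntD_sub] assms by simp
  also have "\<dots> = (\<Sum>B\<in>A. size (Delta G B))" unfolding IntD_def using assms(1) by (rule size_sum_mset)
  also have "\<dots> = (\<Sum>B\<in>A. k * k - k)" using assms size_Delta by simp
  finally show ?thesis by simp
qed

end

lemma DPDF_change:
  "DPDF G v s k l u A \<Longrightarrow> (\<Union>A \<noteq> {} \<longrightarrow> l = l') \<Longrightarrow>
   (carrier G - (\<Union>A \<union> {\<one>\<^bsub>G\<^esub>}) \<noteq> {} \<longrightarrow> u = u') \<Longrightarrow> DPDF G v s k l' u' A"
  unfolding DPDF_def by blast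

lemma EPDF_change:
  "EPDF G v s k l u A \<Longrightarrow> (\<Union>A \<noteq> {} \<longrightarrow> l = l') \<Longrightarrow>
   (carrier G - (\<Union>A \<union> {\<one>\<^bsub>G\<^esub>}) \<noteq> {} \<longrightarrow> u = u') \<Longrightarrow> EPDF G v s k l' u' A"
  unfolding EPDF_def by blast

lemma arith_main:
  fixes m n s k :: nat and lam1 mu1 lam2 mu2 :: int
  assumes n1: "n \<ge> 1" and m1: "m \<ge> 1" and sk: "int s * int k = int m * int n - int n"
    and E: "(int m * int n - int n) * (int k - 1) = (int m * int n - int n) * lam1 + (int n - 1) * mu1"
    and L0: "m \<ge> 2 \<longrightarrow> lam1 + lam2 = int m * int n - 2 * int n"
    and M0: "n \<ge> 2 \<longrightarrow> mu1 + mu2 = int m * int n - int n"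
    and P10: "n \<ge> 2 \<longrightarrow> mu1 \<ge> 0" and P20: "n \<ge> 2 \<longrightarrow> mu2 \<ge> 0"
  shows "int n dvd mu1" "int n dvd mu2"
    "gcd (m * n - n) (m * n - 1) = 1 \<Longrightarrow>
      ((m\<ge>2 \<longrightarrow> lam1 = int k - 1) \<and> (n\<ge>2 \<longrightarrow> mu1 = 0) \<and>
       (m\<ge>2 \<longrightarrow> lam2 = int m * int n - 2 * int n - int k + 1) \<and> (n\<ge>2 \<longrightarrow> mu2 = int m * int n - int n))
    \<or> ((m\<ge>2 \<longrightarrow> lam1 = int k - int n) \<and> (n\<ge>2 \<longrightarrow> mu1 = int m * int n - int n) \<and>
       (m\<ge>2 \<longrightarrow> lam2 = int m * int n - int n - int k) \<and> (n\<ge>2 \<longrightarrow> mu2 = 0))"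
proof -
  note L = L0[rule_format] and M = M0[rule_format] and P1 = P10[rule_format] and P2 = P20[rule_format]
  have E2: "mu1 * (int n - 1) = int n * ((int m - 1) * (int k - 1 - lam1))"
    using E by (simp add: algebra_simps)
  have d1: "int n dvd mu1 * (int n - 1)" unfolding E2 by simp
  have "mu1 = mu1 * int n - mu1 * (int n - 1)" by (simp add: algebra_simps)
  then show dv1: "int n dvd mu1" using d1
    by (metis dvd_diff dvd_triv_right)
  show "int n dvd mu2"
  proof (cases "n \<ge> 2")
    case True
    then have "mu2 = int n * (int m - 1) - mu1" using M by (simp add: algebra_simps)
    then show ?thesis using dv1 by (metis dvd_diff dvd_triv_left)
  next
    case False
    then have "n = 1" using n1 by simp
    then show ?thesis by simp
  qed
  assume g: "gcd (m * n - n) (m * n - 1) = 1"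
  show "((m\<ge>2 \<longrightarrow> lam1 = int k - 1) \<and> (n\<ge>2 \<longrightarrow> mu1 = 0) \<and>
       (m\<ge>2 \<longrightarrow> lam2 = int m * int n - 2 * int n - int k + 1) \<and> (n\<ge>2 \<longrightarrow> mu2 = int m * int n - int n))
    \<or> ((m\<ge>2 \<longrightarrow> lam1 = int k - int n) \<and> (n\<ge>2 \<longrightarrow> mu1 = int m * int n - int n) \<and>
       (m\<ge>2 \<longrightarrow> lam2 = int m * int n - int n - int k) \<and> (n\<ge>2 \<longrightarrow> mu2 = 0))"
  proof (cases "m = 1")
    case True
    then have "gcd 0 (n - 1) = 1" using g by simp
    then have "n = 2" using n1 by simp
    then have "mu1 = 0" using E True by simp
    moreover have "mu2 = 0" using M \<open>n = 2\<close> True \<open>mu1 = 0\<close> by simp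
    ultimately show ?thesis using True \<open>n = 2\<close> by simp
  next
    case False
    then have m2: "m \<ge> 2" using m1 by simp
    show ?thesis
    proof (cases "n = 1")
      case True
      then have "gcd (m - 1) (m - 1) = 1" using g by simp
      then have "m = 2" using m2 by simp
      then have "lam1 = int k - 1" using E True by simp
      then show ?thesis using L m2 True by (simp add: algebra_simps)
    next
      case False
      then have n2: "n \<ge> 2" using n1 by simp
      obtain t where t: "mu1 = int n * t" using dv1 by (auto elim: dvdE)
      have E3: "(int m - 1) * (int k - 1 - lam1) = t * (int n - 1)"
      proof -
        have "int n * (t * (int n - 1)) = int n * ((int m - 1) * (int k - 1 - lam1))"
          using E2 unfolding t by (simp add: mult.assoc)
        then show ?thesis using n2 by simp
      qed
      have cop: "gcd (m - 1) (n - 1) = 1"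
      proof -
        let ?d = "gcd (m - 1) (n - 1)"
        have a: "?d dvd m * n - n"
        proof -
          have "m * n - n = (m - 1) * n" by (simp add: algebra_simps diff_mult_distrib)
          then show ?thesis by simp
        qed
        have "?d dvd (m * n - n) + (n - 1)" using a by simp
        moreover have "(m * n - n) + (n - 1) = m * n - 1"
        proof -
          have "n \<le> m * n" using m1 by simp
          then show ?thesis using n1 by simp
        qed
        ultimately have "?d dvd m * n - 1" by simp
        then have "?d dvd gcd (m * n - n) (m * n - 1)" using a by (intro gcd_greatest)
        then have "?d dvd 1" using g by (simp only:)
        then show ?thesis by simp
      qed
      have copi: "coprime (int m - 1) (int n - 1)"
      proof -
        have "coprime (m - 1) (n - 1)" using cop by (simp add: coprime_iff_gcd_eq_1)
        then have "coprime (int (m - 1)) (int (n - 1))" by simp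
        then show ?thesis using m1 n1 by (simp add: of_nat_diff)
      qed
      have "(int m - 1) dvd t * (int n - 1)" unfolding E3[symmetric] by simp
      then have dt: "(int m - 1) dvd t" using copi
        using coprime_dvd_mult_left_iff by blast
      have t0: "t \<ge> 0" using P1[OF n2] t n2
        by (simp add: zero_le_mult_iff)
      have tm: "t \<le> int m - 1"
      proof -
        have "mu1 \<le> int n * (int m - 1)" using M[OF n2] P2[OF n2] by (simp add: algebra_simps)
        then show ?thesis using t n2 by simp
      qed
      obtain q where q: "t = (int m - 1) * q" using dt by (auto elim: dvdE)
      have mpos: "int m - 1 > 0" using m2 by simp
      have q0: "q \<ge> 0" using t0 q mpos by (simp add: zero_le_mult_iff)
      have q1: "q \<le> 1" using tm q mpos
        by (metis mult.right_neutral mult_le_cancel_left_pos)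
      have "q = 0 \<or> q = 1" using q0 q1 by linarith
      then show ?thesis
      proof
        assume "q = 0"
        then have "t = 0" using q by simp
        then have "mu1 = 0" using t by simp
        moreover have "lam1 = int k - 1" using E3 \<open>t = 0\<close> mpos by simp
        ultimately show ?thesis using L[OF m2] M[OF n2] by (simp add: algebra_simps)
      next
        assume "q = 1"
        then have tt: "t = int m - 1" using q by simp
        then have "mu1 = int m * int n - int n" using t by (simp add: tt algebra_simps)
        moreover have "lam1 = int k - int n" using E3 tt mpos by simp
        ultimately show ?thesis using L[OF m2] M[OF n2] by (simp add: algebra_simps)
      qed
    qed
  qed
qed


theorem mainTheorem11:
  fixes G (structure) and H :: "'a set" and A :: "'a set set"
    and m n s k :: nat and lam1 mu1 lam2 mu2 :: int
  assumes "group G" and "finite (carrier G)" and "order G = m * n"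
    and "subgroup H G" and "card H = n"
    and "partitions A (carrier G - H)"
    and "DPDF G (m * n) s k lam1 mu1 A"
    and "EPDF G (m * n) s k lam2 mu2 A"
  shows "(int n dvd mu1 \<and> int n dvd mu2)
    \<and> (gcd (m * n - n) (m * n - 1) = 1 \<longrightarrow>
         (DPDF G (m * n) s k (int k - 1) 0 A
            \<and> EPDF G (m * n) s k (int m * int n - 2 * int n - int k + 1) (int m * int n - int n) A)
       \<or> (DPDF G (m * n) s k (int k - int n) (int m * int n - int n) A
            \<and> EPDF G (m * n) s k (int m * int n - int n - int k) 0 A))
    \<and> (n = 2 \<longrightarrow>
         (DPDF G (2 * m) s k (int k - 1) 0 A
            \<and> EPDF G (2 * m) s k (2 * int m - 3 - int k) (2 * int m - 2) A)
       \<or> (DPDF G (2 * m) s k (int k - 2) (2 * int m - 2) A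
            \<and> EPDF G (2 * m) s k (2 * int m - 2 - int k) 0 A))"
  proof -
  interpret group G by (rule assms(1))
  let ?S = "carrier G - H"
  have Hs: "H \<subseteq> carrier G" using assms(4) subgroup.subset by blast
  have oneH: "\<one> \<in> H" using assms(4) subgroup.one_closed by blast
  have fin: "finite (carrier G)" by (rule assms(2))
  have finH: "finite H" using fin Hs finite_subset by blast
  have cardG: "card (carrier G) = m * n" using assms(3) unfolding order_def .
  have pf: "pdf_family G (m * n) s k A" using assms(7) unfolding DPDF_def by blast
  have finA: "finite A" and cA: "card A = s" and pw: "pairwise disjnt A"
    and blk: "\<forall>B\<in>A. B \<subseteq> carrier G - {\<one>} \<and> card B = k"
    using pf unfolding pdf_family_def by auto
  have US: "\<Union>A = ?S" using assms(6) unfolding partitions_def by blast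
  have finB: "\<forall>B\<in>A. finite B \<and> B \<subseteq> carrier G \<and> card B = k"
    using blk fin by (auto intro: finite_subset)
  have n1: "n \<ge> 1"
  proof -
    have "card H \<noteq> 0" using finH oneH by auto
    then show ?thesis using assms(5) by simp
  qed
  have m1: "m \<ge> 1"
  proof -
    have "card (carrier G) \<noteq> 0" using fin by auto
    then show ?thesis using cardG by (cases m) auto
  qed
  have nmn: "n \<le> m * n" using m1 by simp
  have cS: "card ?S = m * n - n" using fin Hs finH cardG assms(5) by (simp add: card_Diff_subset)
  have sk: "s * k = m * n - n"
  proof -
    have "card (\<Union>A) = sum card A" by (rule card_Union_disjoint[OF pw]) (use finB in auto)
    also have "\<dots> = s * k" using finB cA by simp
    finally show ?thesis using US cS by simp
  qed
  have rest: "carrier G - (\<Union>A \<union> {\<one>}) = H - {\<one>}" using US Hs by auto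
  have cH1: "card (H - {\<one>}) = n - 1" using finH oneH assms(5) by simp
  have lamI: "\<forall>g\<in>?S. int (count (IntD G A) g) = lam1"
    and muI: "\<forall>g\<in>H - {\<one>}. int (count (IntD G A) g) = mu1"
    using assms(7) US rest unfolding DPDF_def by auto
  have lamE: "\<forall>g\<in>?S. int (count (ExtD G A) g) = lam2"
    and muE: "\<forall>g\<in>H - {\<one>}. int (count (ExtD G A) g) = mu2"
    using assms(8) US rest unfolding EPDF_def by auto
  have pair: "int (count (IntD G A) g) + int (count (ExtD G A) g) = int (card {y\<in>?S. g \<otimes> y \<in> ?S})"
    if "g \<in> carrier G" "g \<noteq> \<one>" for g
  proof -
    have "count (IntD G A) g + count (ExtD G A) g
       = card {(x,y). x \<in> \<Union>A \<and> y \<in> \<Union>A \<and> x\<noteq>y \<and> x \<otimes> inv y = g}"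
      using int_ext_count[OF finA _ pw] finB by blast
    also have "\<dots> = card {y\<in>?S. g \<otimes> y \<in> ?S}" unfolding US
      by (rule pair_count) (use that in auto)
    finally show ?thesis by (metis of_nat_add)
  qed
  have tot: "(\<Sum>g\<in>carrier G. int (count (IntD G A) g)) = int (s * (k * k - k))"
    using IntD_total[OF finA finB fin] cA by (simp flip: of_nat_sum)
  have split: "carrier G = ?S \<union> ((H - {\<one>}) \<union> {\<one>})" using Hs oneH by auto
  have "(\<Sum>g\<in>carrier G. int (count (IntD G A) g))
      = (\<Sum>g\<in>?S. int (count (IntD G A) g)) + ((\<Sum>g\<in>H - {\<one>}. int (count (IntD G A) g))
         + int (count (IntD G A) \<one>))"
    apply (subst split)
    apply (subst sum.union_disjoint)
    using fin finH oneH apply auto[3]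
    apply (subst sum.union_disjoint)
    using finH apply auto
    done
  also have "\<dots> = int (card ?S) * lam1 + int (card (H - {\<one>})) * mu1"
    using lamI muI IntD_one[OF finA] finB by simp
  finally have tot2: "int (s * (k * k - k)) = int (m * n - n) * lam1 + int (n - 1) * mu1"
    using tot cS cH1 by simp
  have E: "(int m * int n - int n) * (int k - 1) = (int m * int n - int n) * lam1 + (int n - 1) * mu1"
  proof (cases "k = 0")
    case True
    then have "m * n - n = 0" using sk by simp
    then have "m = 1" using n1 m1 by (cases m) auto
    then have "int m * int n - int n = 0" by simp
    then show ?thesis using tot2 True \<open>m * n - n = 0\<close> n1 by (simp add: of_nat_diff)
  next
    case False
    have "s * (k * k - k) = (m * n - n) * (k - 1)" using sk
      by (metis diff_mult_distrib2 mult.assoc mult.commute mult.right_neutral)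
    then have "int (s * (k * k - k)) = (int m * int n - int n) * (int k - 1)"
      using False nmn by (simp add: of_nat_diff)
    then show ?thesis using tot2 nmn n1 by (simp add: of_nat_diff)
  qed
  have mS: "m \<ge> 2" if "?S \<noteq> {}"
  proof -
    have "card ?S \<noteq> 0" using that fin by auto
    then have "m \<noteq> 1" using cS by auto
    then show ?thesis using m1 by simp
  qed
  have nS: "n \<ge> 2" if "H - {\<one>} \<noteq> {}"
  proof -
    have "card (H - {\<one>}) \<noteq> 0" using that finH by auto
    then show ?thesis using cH1 by simp
  qed
  have L: "lam1 + lam2 = int m * int n - 2 * int n" if m2: "m \<ge> 2"
  proof -
    have "2 * n \<le> m * n" using m2 by simp
    then have "card ?S \<noteq> 0" using cS n1 by linarith
    then obtain g where g: "g \<in> ?S" by (metis card.empty ex_in_conv)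
    have "g \<noteq> \<one>" using g oneH by auto
    have "int (card {y\<in>?S. g \<otimes> y \<in> ?S}) = int (m * n - 2 * n)"
      using shift_count(2)[OF assms(4) fin] g cardG assms(5) by auto
    also have "\<dots> = int m * int n - 2 * int n"
    proof -
      have "2 * n \<le> m * n" using m2 by simp
      then show ?thesis by (simp add: of_nat_diff)
    qed
    finally show ?thesis using pair[of g] g \<open>g \<noteq> \<one>\<close> lamI lamE by auto
  qed
  have hex: "\<exists>h. h \<in> H - {\<one>}" if "n \<ge> 2"
  proof -
    have "card (H - {\<one>}) \<noteq> 0" using cH1 that by simp
    then show ?thesis by (metis card.empty ex_in_conv)
  qed
  have M: "mu1 + mu2 = int m * int n - int n" if n2: "n \<ge> 2"
  proof -
    obtain h where h: "h \<in> H - {\<one>}" using hex[OF n2] by blast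
    have "int (card {y\<in>?S. h \<otimes> y \<in> ?S}) = int (m * n - n)"
      using shift_count(1)[OF assms(4) fin] h Hs cardG assms(5) by auto
    also have "\<dots> = int m * int n - int n" using nmn by (simp add: of_nat_diff)
    finally show ?thesis using pair[of h] h Hs muI muE by auto
  qed
  have P1: "mu1 \<ge> 0" if n2: "n \<ge> 2"
  proof -
    obtain h where h: "h \<in> H - {\<one>}" using hex[OF n2] by blast
    then show ?thesis using muI by force
  qed
  have P2: "mu2 \<ge> 0" if n2: "n \<ge> 2"
  proof -
    obtain h where h: "h \<in> H - {\<one>}" using hex[OF n2] by blast
    then show ?thesis using muE by force
  qed
  have skI: "int s * int k = int m * int n - int n" using sk nmn by (metis of_nat_diff of_nat_mult)
  have L0: "m \<ge> 2 \<longrightarrow> lam1 + lam2 = int m * int n - 2 * int n" using L by blast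
  have M0: "n \<ge> 2 \<longrightarrow> mu1 + mu2 = int m * int n - int n" using M by blast
  have P10: "n \<ge> 2 \<longrightarrow> mu1 \<ge> 0" using P1 by blast
  have P20: "n \<ge> 2 \<longrightarrow> mu2 \<ge> 0" using P2 by blast
  note AR = arith_main[OF n1 m1 skI E L0 M0 P10 P20]
  have II: "gcd (m * n - n) (m * n - 1) = 1 \<longrightarrow>
         (DPDF G (m * n) s k (int k - 1) 0 A
            \<and> EPDF G (m * n) s k (int m * int n - 2 * int n - int k + 1) (int m * int n - int n) A)
       \<or> (DPDF G (m * n) s k (int k - int n) (int m * int n - int n) A
            \<and> EPDF G (m * n) s k (int m * int n - int n - int k) 0 A)"
  proof
    assume g: "gcd (m * n - n) (m * n - 1) = 1"
    from AR(3)[OF g] show "(DPDF G (m * n) s k (int k - 1) 0 A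
            \<and> EPDF G (m * n) s k (int m * int n - 2 * int n - int k + 1) (int m * int n - int n) A)
       \<or> (DPDF G (m * n) s k (int k - int n) (int m * int n - int n) A
            \<and> EPDF G (m * n) s k (int m * int n - int n - int k) 0 A)"
    proof
      assume a: "(m\<ge>2 \<longrightarrow> lam1 = int k - 1) \<and> (n\<ge>2 \<longrightarrow> mu1 = 0) \<and>
       (m\<ge>2 \<longrightarrow> lam2 = int m * int n - 2 * int n - int k + 1) \<and> (n\<ge>2 \<longrightarrow> mu2 = int m * int n - int n)"
      have "DPDF G (m * n) s k (int k - 1) 0 A"
        by (rule DPDF_change[OF assms(7)]) (use a mS nS US rest in auto)
      moreover have "EPDF G (m * n) s k (int m * int n - 2 * int n - int k + 1) (int m * int n - int n) A"
        by (rule EPDF_change[OF assms(8)]) (use a mS nS US rest in auto)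
      ultimately show ?thesis by blast
    next
      assume a: "(m\<ge>2 \<longrightarrow> lam1 = int k - int n) \<and> (n\<ge>2 \<longrightarrow> mu1 = int m * int n - int n) \<and>
       (m\<ge>2 \<longrightarrow> lam2 = int m * int n - int n - int k) \<and> (n\<ge>2 \<longrightarrow> mu2 = 0)"
      have "DPDF G (m * n) s k (int k - int n) (int m * int n - int n) A"
        by (rule DPDF_change[OF assms(7)]) (use a mS nS US rest in auto)
      moreover have "EPDF G (m * n) s k (int m * int n - int n - int k) 0 A"
        by (rule EPDF_change[OF assms(8)]) (use a mS nS US rest in auto)
      ultimately show ?thesis by blast
    qed
  qed
  have III: "n = 2 \<longrightarrow>
         (DPDF G (2 * m) s k (int k - 1) 0 A
            \<and> EPDF G (2 * m) s k (2 * int m - 3 - int k) (2 * int m - 2) A)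
       \<or> (DPDF G (2 * m) s k (int k - 2) (2 * int m - 2) A
            \<and> EPDF G (2 * m) s k (2 * int m - 2 - int k) 0 A)"
  proof
    assume n2: "n = 2"
    have "gcd (m * n - n) (m * n - 1) = 1"
    proof -
      have "m * n - 1 = Suc (m * n - n)" using n2 m1 by simp
      then show ?thesis by simp
    qed
    with II have R: "(DPDF G (m * n) s k (int k - 1) 0 A
            \<and> EPDF G (m * n) s k (int m * int n - 2 * int n - int k + 1) (int m * int n - int n) A)
       \<or> (DPDF G (m * n) s k (int k - int n) (int m * int n - int n) A
            \<and> EPDF G (m * n) s k (int m * int n - int n - int k) 0 A)" by blast
    have e0: "m * n = 2 * m" using n2 by simp
    have e1: "int m * int n - 2 * int n - int k + 1 = 2 * int m - 3 - int k" using n2 by simp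
    have e2: "int m * int n - int n = 2 * int m - 2" using n2 by simp
    have e3: "int k - int n = int k - 2" using n2 by simp
    have e4: "int m * int n - int n - int k = 2 * int m - 2 - int k" using n2 by simp
    show "(DPDF G (2 * m) s k (int k - 1) 0 A
            \<and> EPDF G (2 * m) s k (2 * int m - 3 - int k) (2 * int m - 2) A)
       \<or> (DPDF G (2 * m) s k (int k - 2) (2 * int m - 2) A
            \<and> EPDF G (2 * m) s k (2 * int m - 2 - int k) 0 A)"
      using R unfolding e0 e1 e2 e3 e4 .
  qed
  show ?thesis using AR(1) AR(2) II III by blast
qed

end
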